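(* Let $n\ge2$ and $\mathbf{F}\in\mathbb{R}^n$ with $F_k>0$ for all $k$ and $F_k\ge F_{k+1}$ for $2\le k\le n-1$. Let $U_i=\frac{i}{3/F_1+\sum_{k=2}^i1/F_k}$ for $1\le i\le n$, let $u$ be the least index in $\arg\max_{1\le i\le n}U_i$, and define $\boldsymbol\mu\in\mathbb{R}^{n-1}$ by $\mu_k=\frac13\big(1-\frac{U_u}{F_{k+1}}\big)$ for $1\le k\le u-1$ and $\mu_k=0$ for $u\le k\le n-1$. Then: (1) $\mu_k\ge0$ for all $1\le k\le n-1$; (2) $F_1\big(\frac13+\sum_{i=1}^{u-1}\mu_i\big)=F_k(1-3\mu_{k-1})=U_u$ for all $2\le k\le u$; (3) $F_k\le U_u$ for all $u+1\le k\le n$.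
   Context: Note $U_u=\frac{u}{3/F_1+\sum_{k=2}^u1/F_k}$. *)

theory Defs
  imports Complex_Main
begin

text \<open>Vectors F in R^n are represented as functions nat => real, used on indices 1..n.\<close>

definition U :: "(nat \<Rightarrow> real) \<Rightarrow> nat \<Rightarrow> real" where
  "U F i = real i / (3 / F 1 + (\<Sum>k=2..i. 1 / F k))"

definition uidx :: "(nat \<Rightarrow> real) \<Rightarrow> nat \<Rightarrow> nat" where
  "uidx F n = (LEAST i. i \<in> {1..n} \<and> (\<forall>j\<in>{1..n}. U F j \<le> U F i))"

definition mu :: "(nat \<Rightarrow> real) \<Rightarrow> nat \<Rightarrow> nat \<Rightarrow> real" where
  "mu F n k = (if 1 \<le> k \<and> k \<le> uidx F n - 1
               then (1 - U F (uidx F n) / F (k + 1)) / 3 else 0)"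

end

theory Submission
  imports Defs
begin

lemma mono_F:
  fixes F :: "nat \<Rightarrow> real"
  assumes "\<And>k. 2 \<le> k \<Longrightarrow> k \<le> n - 1 \<Longrightarrow> F k \<ge> F (k + 1)"
    and "2 \<le> j" "j \<le> k" "k \<le> n"
  shows "F k \<le> F j"
  using assms(3,4)
proof (induction k rule: dec_induct)
  case base then show ?case by simp
next
  case (step m)
  have "F (m+1) \<le> F m" using assms(1)[of m] step assms(2) by simp
  then show ?case using step by simp
qed

theorem lemma6:
  fixes F :: "nat \<Rightarrow> real" and n :: nat
  assumes "n \<ge> 2"
    and "\<And>k. k \<in> {1..n} \<Longrightarrow> F k > 0"
    and "\<And>k. 2 \<le> k \<Longrightarrow> k \<le> n - 1 \<Longrightarrow> F k \<ge> F (k + 1)"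
  shows "(\<forall>k\<in>{1..n-1}. mu F n k \<ge> 0)
       \<and> (\<forall>k\<in>{2..uidx F n}.
            F 1 * (1/3 + (\<Sum>i=1..uidx F n - 1. mu F n i)) = U F (uidx F n)
          \<and> F k * (1 - 3 * mu F n (k - 1)) = U F (uidx F n))
       \<and> (\<forall>k\<in>{uidx F n + 1..n}. F k \<le> U F (uidx F n))"
proof -
  define S where "S i = 3 / F 1 + (\<Sum>k=2..i. 1 / F k)" for i
  have US: "U F i = real i / S i" for i by (simp add: U_def S_def)
  have Fpos: "F k > 0" if "1 \<le> k" "k \<le> n" for k using assms(2) that by simp
  have Spos: "S i > 0" if "i \<le> n" for i
  proof -
    have "(\<Sum>k=2..i. 1 / F k) \<ge> 0"
      using Fpos that by (intro sum_nonneg) (simp add: less_imp_le)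
    moreover have "3 / F 1 > 0" using Fpos[of 1] assms(1) by simp
    ultimately show ?thesis unfolding S_def by linarith
  qed
  have Ssuc: "S (Suc i) = S i + 1 / F (Suc i)" if "1 \<le> i" for i
    using that by (simp add: S_def)
  define u where "u = uidx F n"
  have fin: "finite (U F ` {1..n})" by simp
  have ne: "U F ` {1..n} \<noteq> {}" using assms(1) by auto
  obtain m where m: "m \<in> {1..n}" "U F m = Max (U F ` {1..n})"
    using Max_in[OF fin ne] by auto
  have ex: "\<exists>i. i \<in> {1..n} \<and> (\<forall>j\<in>{1..n}. U F j \<le> U F i)"
    using m fin by (intro exI[of _ m]) auto
  have uP: "u \<in> {1..n} \<and> (\<forall>j\<in>{1..n}. U F j \<le> U F u)"
    unfolding u_def uidx_def by (rule LeastI_ex[OF ex])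
  hence u1: "1 \<le> u" "u \<le> n" and umax: "\<And>j. j \<in> {1..n} \<Longrightarrow> U F j \<le> U F u" by auto
  have Su: "S u > 0" using Spos u1 by simp
  have Fu: "U F u \<le> F u" if u2: "2 \<le> u"
  proof -
    obtain v where v: "u = Suc v" "1 \<le> v" using u2 by (intro that[of "u - 1"]) auto
    have Sv: "S v > 0" using Spos v u1 by simp
    have Fv: "F u > 0" using Fpos u1 by simp
    have "U F v \<le> U F u" using umax v u1 by simp
    hence "real v / S v \<le> real u / (S v + 1 / F u)"
      using US Ssuc v by simp
    hence "real v * (S v + 1 / F u) \<le> real u * S v"
      using Sv Fv by (simp add: divide_simps add_pos_pos ac_simps) 
    hence "real v / F u \<le> S v" using v by (simp add: algebra_simps)
    hence "real u \<le> F u * (S v + 1 / F u)" using v Fv by (simp add: field_simps)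
    hence "real u / (S v + 1 / F u) \<le> F u" using Sv Fv
      by (simp add: divide_simps add_pos_pos ac_simps)
    thus ?thesis using US Ssuc v by simp
  qed
  have FgeU: "U F u \<le> F j" if "2 \<le> j" "j \<le> u" for j
    using mono_F[where F=F and n=n and j=j and k=u, OF assms(3)] that Fu u1 by linarith
  have P1: "\<forall>k\<in>{1..n-1}. mu F n k \<ge> 0"
  proof
    fix k assume k: "k \<in> {1..n-1}"
    show "mu F n k \<ge> 0"
    proof (cases "1 \<le> k \<and> k \<le> u - 1")
      case True
      have "U F u \<le> F (k+1)" using FgeU[of "k+1"] True by fastforce
      moreover have "F (k+1) > 0" using Fpos[of "k+1"] True u1 by fastforce
      ultimately have "U F u / F (k+1) \<le> 1" by simp
      thus ?thesis using True by (simp add: mu_def u_def[symmetric])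
    next
      case False thus ?thesis unfolding mu_def u_def[symmetric] by auto
    qed
  qed
  have P2: "\<forall>k\<in>{2..u}. F 1 * (1/3 + (\<Sum>i=1..u - 1. mu F n i)) = U F u
          \<and> F k * (1 - 3 * mu F n (k - 1)) = U F u"
  proof
    fix k assume k: "k \<in> {2..u}"
    have "F k > 0" using Fpos k u1 by simp
    moreover have "mu F n (k - 1) = (1 - U F u / F k) / 3"
      using k unfolding mu_def u_def[symmetric] by auto
    ultimately have A: "F k * (1 - 3 * mu F n (k - 1)) = U F u"
      by (simp add: field_simps)
    have "(\<Sum>i=1..u - 1. mu F n i) = (\<Sum>i=1..u - 1. (1 - U F u / F (i + 1)) / 3)"
      by (rule sum.cong) (auto simp: mu_def u_def[symmetric])
    also have "\<dots> = (real (u - 1) - U F u * (\<Sum>i=1..u - 1. 1 / F (i + 1))) / 3"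
      by (simp add: sum_divide_distrib[symmetric] sum_subtractf sum_distrib_left)
    also have "(\<Sum>i=1..u - 1. 1 / F (i + 1)) = (\<Sum>i=2..u. 1 / F i)"
    proof -
      have "(\<Sum>i=1..u - 1. 1 / F (i + 1)) = (\<Sum>i=Suc 1..Suc (u - 1). 1 / F i)"
        by (subst sum.shift_bounds_cl_Suc_ivl) simp
      thus ?thesis using u1 by (simp add: numeral_2_eq_2)
    qed
    also have "(\<Sum>i=2..u. 1 / F i) = S u - 3 / F 1" by (simp add: S_def)
    finally have sm: "(\<Sum>i=1..u - 1. mu F n i) = (real (u - 1) - U F u * (S u - 3 / F 1)) / 3" .
    have F1: "F 1 > 0" using Fpos assms(1) by simp
    have Uu: "U F u * S u = real u" using US[of u] Su by simp
    have "F 1 * (1/3 + (real (u - 1) - U F u * (S u - 3 / F 1)) / 3)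
        = F 1 * (real u - U F u * S u) / 3 + U F u"
      using u1 F1 by (simp add: of_nat_diff field_simps)
    also have "\<dots> = U F u" using Uu by simp
    finally have B: "F 1 * (1/3 + (\<Sum>i=1..u - 1. mu F n i)) = U F u" unfolding sm .
    show "F 1 * (1/3 + (\<Sum>i=1..u - 1. mu F n i)) = U F u
          \<and> F k * (1 - 3 * mu F n (k - 1)) = U F u" using A B by simp
  qed
  have P3: "\<forall>k\<in>{u + 1..n}. F k \<le> U F u"
  proof
    fix k assume k: "k \<in> {u + 1..n}"
    have Sv: "S u > 0" by (rule Su)
    have Fv: "F (Suc u) > 0" using Fpos k by simp
    have "U F (Suc u) \<le> U F u" using umax k by simp
    hence "real (Suc u) / (S u + 1 / F (Suc u)) \<le> real u / S u"
      using US Ssuc u1 by simp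
    hence "real (Suc u) * S u \<le> real u * (S u + 1 / F (Suc u))"
      using Sv Fv by (simp add: divide_simps add_pos_pos ac_simps)
    hence "S u \<le> real u / F (Suc u)" by (simp add: algebra_simps)
    hence "F (Suc u) * S u \<le> real u" using Fv by (simp add: field_simps)
    hence "F (Suc u) \<le> U F u" using Sv US[of u] by (simp add: pos_le_divide_eq mult.commute)
    moreover have "F k \<le> F (Suc u)" using mono_F[where F=F and n=n and j="Suc u" and k=k, OF assms(3)] k u1 by simp
    ultimately show "F k \<le> U F u" by linarith
  qed
  show ?thesis using P1 P2 P3 unfolding u_def by simp
qed

end
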